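(* Let $U=[N]$, let $\ell$ be a positive integer dividing $N$, let $\mathcal{S}=\{S_1,\dots,S_m\}$ be a collection of subsets of $U$ each of size $N/\ell$, and let $\varepsilon>0$ satisfy $\varepsilon\le 0.06$ and $\varepsilon\ge \frac1e-\left(1-\frac1\ell\right)^\ell$. Let $I_{\mathrm{rp}}$ be the $k$-RP instance with $k=\ell$, point set $\mathcal{X}=U\cup\mathcal{S}$ (an element point for each $u\in U$ and a set point for each $S\in\mathcal{S}$), distance $d(u,S)=1$ if $u\in S$ and $d(u,S)=2-\varepsilon$ if $u\notin S$ for $u\in U$, $S\in\mathcal{S}$; $d(u_1,u_2)=2$ for distinct $u_1,u_2\in U$; $d(S_1,S_2)=1$ for distinct set points; and $P$ uniform over the element points $U$. Suppose that any $\ell$ sets from $\mathcal{S}$ cover at most a $1-1/e+\varepsilon$ fraction of the elements of $U$ (a partial covering instance). Then every $k$-RP solution for $I_{\mathrm{rp}}$ consisting of $k$ set points (repetitions allowed) has cost at least $k\cdot\left(1+e^{-1+2/e}-e^{-1}-3(1+1/e)\varepsilon\right)$.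
   Context: For a finite metric space $(\mathcal{X},d)$, $\mathcal{X}_k$ is the set of multisets of exactly $k$ points of $\mathcal{X}$; for $A,B\in\mathcal{X}_k$, $d_k(A,B)$ is the minimum, over perfect matchings between the elements of $A$ and of $B$ (with multiplicity), of the sum of the distances of matched pairs; $P_k$ is the distribution of $k$ points drawn i.i.d. from $P$. A $k$-RP solution is a $K\in\mathcal{X}_k$, and its cost is $\mathbb{E}_{L\sim P_k}[d_k(K,L)]$. *)

theory Defs
  imports "HOL-Analysis.Analysis" "HOL-Library.Multiset"
begin

text \<open>Points of the k-RP instance: element points Elem u (u in U = {0..<N})
  and set points SetP i (the i-th set S i, i < m).\<close>
datatype rp_point = Elem nat | SetP nat

fun rp_dist :: "(nat \<Rightarrow> nat set) \<Rightarrow> real \<Rightarrow> rp_point \<Rightarrow> rp_point \<Rightarrow> real" where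
  "rp_dist S \<epsilon> (Elem u) (Elem v) = (if u = v then 0 else 2)"
| "rp_dist S \<epsilon> (SetP i) (SetP j) = (if i = j then 0 else 1)"
| "rp_dist S \<epsilon> (Elem u) (SetP i) = (if u \<in> S i then 1 else 2 - \<epsilon>)"
| "rp_dist S \<epsilon> (SetP i) (Elem u) = (if u \<in> S i then 1 else 2 - \<epsilon>)"

text \<open>A perfect matching is
  represented by two lists enumerating A and B, matched position-wise.\<close>
definition dk :: "('p \<Rightarrow> 'p \<Rightarrow> real) \<Rightarrow> 'p multiset \<Rightarrow> 'p multiset \<Rightarrow> real" where
  "dk d A B = Min {sum_list (map2 d xs ys) | xs ys. mset xs = A \<and> mset ys = B}"

text \<open>Cost of a k-RP solution K: expectation of d_k(K,L) for L consisting of k points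
  drawn i.i.d. uniformly from the element points U = {0..<N}.\<close>
definition rp_cost :: "(nat \<Rightarrow> nat set) \<Rightarrow> real \<Rightarrow> nat \<Rightarrow> nat \<Rightarrow> rp_point multiset \<Rightarrow> real" where
  "rp_cost S \<epsilon> N k K =
     (\<Sum>xs\<in>{xs. set xs \<subseteq> {..<N} \<and> length xs = k}.
        dk (rp_dist S \<epsilon>) K (mset (map Elem xs))) / real N ^ k"

end

theory Submission imports Defs begin


lemma pow_ge_exp:
  fixes t :: real and l :: nat
  assumes "0 \<le> t" "t \<le> 1" "l > 0"
  shows "exp (-t) \<le> (1 - t / l) ^ (l - 1)"
proof (cases "l = 1")
  case True thus ?thesis using assms by simp
next
  case False
  define s where "s = t / l"
  have l1: "real l \<ge> 1" using assms by simp
  have l2: "real l \<ge> 2" using assms False by simp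
  have s0: "0 \<le> s" and s1: "s < 1" using assms l2 by (auto simp: s_def divide_le_eq_1 field_simps)
  have "1 / (1 - s) = 1 + s / (1 - s)" using s1 by (simp add: field_simps)
  also have "\<dots> \<le> exp (s / (1 - s))" by (rule exp_ge_add_one_self)
  finally have "1 / (1 - s) \<le> exp (s / (1 - s))" .
  hence e1: "exp (- (s / (1 - s))) \<le> 1 - s" using s1
    by (simp add: exp_minus field_simps)
  have "exp (- (s / (1 - s))) ^ (l - 1) \<le> (1 - s) ^ (l - 1)"
    by (rule power_mono[OF e1]) simp
  moreover have "exp (- (s / (1 - s))) ^ (l - 1) = exp (- (real (l - 1) * (s / (1 - s))))"
    by (simp add: exp_of_nat_mult[symmetric])
  moreover have "real (l - 1) * (s / (1 - s)) \<le> t"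
  proof -
    have "real (l - 1) = real l - 1" using assms by simp
    moreover have "(real l - 1) * s \<le> t * (1 - s)"
    proof -
      have "t * t \<le> 1 * t" using assms by (intro mult_right_mono) auto
      hence "t * t * real l \<le> t * real l" by (intro mult_right_mono) auto
      thus ?thesis using assms l1 by (simp add: s_def field_simps)
    qed
    ultimately show ?thesis using s1 by (simp add: field_simps)
  qed
  ultimately show ?thesis unfolding s_def by (smt (verit) exp_le_cancel_iff)
qed

lemma h_mono:
  fixes x :: real and l :: nat
  assumes "0 \<le> x" "x \<le> 1" "l > 0"
  shows "exp (-x) - (1 - x / l) ^ l \<le> exp (-1) - (1 - 1 / l) ^ l"
proof -
  let ?h = "\<lambda>t::real. exp (-t) - (1 - t / l) ^ l"
  have "?h x \<le> ?h 1"
  proof (rule deriv_nonneg_imp_mono[where g = ?h and g' = "\<lambda>t. - exp (-t) + (1 - t / l) ^ (l - 1)"])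
    fix t assume "t \<in> {x..1}"
    have "(?h has_real_derivative (exp (-t) * (-1) - real l * (1 - t / l) ^ (l - 1) * (0 - 1 / l))) (at t)"
      by (auto intro!: derivative_eq_intros)
    moreover have "exp (-t) * (-1) - real l * (1 - t / l) ^ (l - 1) * (0 - 1 / l) = - exp (-t) + (1 - t / l) ^ (l - 1)"
      using assms by simp
    ultimately show "(?h has_real_derivative - exp (-t) + (1 - t / l) ^ (l - 1)) (at t)" by simp
    show "0 \<le> - exp (-t) + (1 - t / l) ^ (l - 1)"
      using pow_ge_exp[of t l] assms \<open>t \<in> {x..1}\<close> by auto
  qed (use assms in auto)
  thus ?thesis by simp
qed


lemma sum_lists_sum_list:
  fixes g :: "'a \<Rightarrow> real"
  assumes "finite U"
  shows "(\<Sum>xs\<in>{xs. set xs \<subseteq> U \<and> length xs = n}. (\<Sum>u\<leftarrow>xs. g u))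
         = real n * real (card U) ^ (n - 1) * (\<Sum>u\<in>U. g u)"
proof (induction n)
  case 0
  then show ?case by simp
next
  case (Suc n)
  let ?L = "{xs. set xs \<subseteq> U \<and> length xs = n}"
  have fin: "finite ?L" using assms by (rule finite_lists_length_eq)
  have "(\<Sum>xs\<in>{xs. set xs \<subseteq> U \<and> length xs = Suc n}. (\<Sum>u\<leftarrow>xs. g u))
      = (\<Sum>p\<in>?L \<times> U. (\<Sum>u\<leftarrow>(snd p # fst p). g u))"
    unfolding lists_length_Suc_eq
    by (subst sum.reindex) (auto simp: inj_on_def split_beta)
  also have "\<dots> = (\<Sum>xs\<in>?L. \<Sum>x\<in>U. g x + (\<Sum>u\<leftarrow>xs. g u))"
    by (simp add: sum.cartesian_product split_beta)
  also have "\<dots> = (\<Sum>xs\<in>?L. (\<Sum>x\<in>U. g x) + real (card U) * (\<Sum>u\<leftarrow>xs. g u))"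
    by (simp add: sum.distrib)
  also have "\<dots> = real (card ?L) * (\<Sum>x\<in>U. g x) + real (card U) * (\<Sum>xs\<in>?L. (\<Sum>u\<leftarrow>xs. g u))"
    by (simp add: sum.distrib sum_distrib_left)
  also have "\<dots> = real (card U) ^ n * (\<Sum>x\<in>U. g x) + real (card U) * (real n * real (card U) ^ (n - 1) * (\<Sum>u\<in>U. g u))"
    using Suc.IH assms by (simp add: card_lists_length_eq)
  also have "\<dots> = real (Suc n) * real (card U) ^ (Suc n - 1) * (\<Sum>u\<in>U. g u)"
    by (cases n) (auto simp: algebra_simps)
  finally show ?case .
qed

lemma count_hit:
  assumes "finite U" "Q \<subseteq> U"
  shows "(\<Sum>xs\<in>{xs. set xs \<subseteq> U \<and> length xs = n}. (if set xs \<inter> Q \<noteq> {} then 1 else 0::real))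
       = real (card U) ^ n - real (card U - card Q) ^ n"
proof -
  let ?L = "{xs. set xs \<subseteq> U \<and> length xs = n}"
  let ?M = "{xs. set xs \<subseteq> U - Q \<and> length xs = n}"
  have fin: "finite ?L" using assms by (intro finite_lists_length_eq)
  have sub: "?M \<subseteq> ?L" by auto
  have eq: "?L \<inter> {xs. set xs \<inter> Q = {}} = ?M" by auto
  have "(\<Sum>xs\<in>?L. (if set xs \<inter> Q \<noteq> {} then 1 else 0::real))
      = (\<Sum>xs\<in>?L. 1 - (if set xs \<inter> Q = {} then 1 else 0::real))"
    by (intro sum.cong) auto
  also have "\<dots> = real (card ?L) - real (card ?M)"
    using fin by (simp add: sum_subtractf sum.If_cases eq)
  also have "\<dots> = real (card U) ^ n - real (card U - card Q) ^ n"
    using assms by (simp add: card_lists_length_eq card_Diff_subset finite_subset)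
  finally show ?thesis .
qed



definition cov :: "(nat \<Rightarrow> nat set) \<Rightarrow> (nat \<Rightarrow> nat) \<Rightarrow> nat \<Rightarrow> nat \<Rightarrow> nat" where
  "cov S f l u = card {j. j < l \<and> u \<in> S (f j)}"

definition Aset :: "(nat \<Rightarrow> nat set) \<Rightarrow> (nat \<Rightarrow> nat) \<Rightarrow> nat \<Rightarrow> nat list \<Rightarrow> nat set" where
  "Aset S f l xs = {j. j < l \<and> (\<exists>u\<in>set xs. u \<in> S (f j) \<and> cov S f l u = 1)}"

lemma finite_mset_eq: "finite {xs. mset xs = A}"
proof -
  have "{xs. mset xs = A} \<subseteq> {xs. set xs \<subseteq> set_mset A \<and> length xs = size A}" by auto
  thus ?thesis by (rule finite_subset) (intro finite_lists_length_eq, simp)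
qed

lemma sum_list_zip_lin:
  fixes g :: "'a \<Rightarrow> real" and h :: "'b \<Rightarrow> real"
  assumes "length ys = length zs"
  shows "(\<Sum>(y,z)\<leftarrow>zip ys zs. a - b * (g y + h z))
       = real (length ys) * a - b * ((\<Sum>y\<leftarrow>ys. g y) + (\<Sum>z\<leftarrow>zs. h z))"
  using assms by (induction ys zs rule: list_induct2) (auto simp: algebra_simps)

lemma sum_list_via_mset:
  fixes g :: "'a \<Rightarrow> real"
  assumes "mset ys = mset ws"
  shows "(\<Sum>y\<leftarrow>ys. g y) = (\<Sum>y\<leftarrow>ws. g y)"
proof -
  have "(\<Sum>y\<leftarrow>ys. g y) = sum_mset (mset (map g ys))" by (simp only: sum_mset_sum_list)
  also have "\<dots> = sum_mset (mset (map g ws))" by (simp only: mset_map assms)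
  also have "\<dots> = (\<Sum>y\<leftarrow>ws. g y)" by (simp only: sum_mset_sum_list)
  finally show ?thesis .
qed

lemma cov_one_unique:
  assumes "cov S f l u = 1" "j < l" "u \<in> S (f j)" "j' < l" "u \<in> S (f j')"
  shows "j = j'"
proof -
  have "card {j. j < l \<and> u \<in> S (f j)} = 1" using assms(1) by (simp add: cov_def)
  then obtain a where eq: "{j. j < l \<and> u \<in> S (f j)} = {a}" by (rule card_1_singletonE)
  have "j \<in> {j. j < l \<and> u \<in> S (f j)}" using assms by simp
  hence 1: "j = a" unfolding eq by simp
  have "j' \<in> {j. j < l \<and> u \<in> S (f j)}" using assms by simp
  hence 2: "j' = a" unfolding eq by simp
  show ?thesis using 1 2 by simp
qed

lemma cov_pos:
  assumes "j < l" "u \<in> S (f j)"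
  shows "cov S f l u \<ge> 1"
proof -
  have "j \<in> {j. j < l \<and> u \<in> S (f j)}" using assms by simp
  moreover have "finite {j. j < l \<and> u \<in> S (f j)}" by simp
  ultimately have "card {j. j < l \<and> u \<in> S (f j)} > 0" using card_gt_0_iff by blast
  thus ?thesis unfolding cov_def by simp
qed

lemma dk_lower:
  fixes \<epsilon> :: real
  assumes eps: "\<epsilon> \<le> 1" and len: "length xs = l"
  shows "real l * (2 - \<epsilon>) - (1 - \<epsilon>) * (real (card (Aset S f l xs))
           + (\<Sum>u\<leftarrow>xs. if cov S f l u \<ge> 2 then 1 else 0))
         \<le> dk (rp_dist S \<epsilon>) (mset (map (\<lambda>j. SetP (f j)) [0..<l])) (mset (map Elem xs))"
proof -
  let ?K = "mset (map (\<lambda>j. SetP (f j)) [0..<l])"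
  let ?L = "mset (map Elem xs)"
  let ?A = "Aset S f l xs"
  let ?Apts = "(\<lambda>j. SetP (f j)) ` ?A"
  define g :: "rp_point \<Rightarrow> real" where "g y = (if y \<in> ?Apts then 1 else 0)" for y
  define h :: "rp_point \<Rightarrow> real" where "h z = (if z \<in> Elem ` {u. cov S f l u \<ge> 2} then 1 else 0)" for z
  let ?lhs = "real l * (2 - \<epsilon>) - (1 - \<epsilon>) * (real (card ?A)
           + (\<Sum>u\<leftarrow>xs. if cov S f l u \<ge> 2 then 1 else 0))"
  let ?V = "{sum_list (map2 (rp_dist S \<epsilon>) ys zs) | ys zs. mset ys = ?K \<and> mset zs = ?L}"
  have Veq: "?V = (\<lambda>(ys, zs). sum_list (map2 (rp_dist S \<epsilon>) ys zs)) ` ({ys. mset ys = ?K} \<times> {zs. mset zs = ?L})"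
    by auto
  have finV: "finite ?V" unfolding Veq by (intro finite_imageI finite_cartesian_product finite_mset_eq)
  have neV: "?V \<noteq> {}"
  proof -
    obtain ys where "mset ys = ?K" using ex_mset by blast
    moreover obtain zs where "mset zs = ?L" using ex_mset by blast
    ultimately show ?thesis by blast
  qed
  have gsum: "(\<Sum>j\<leftarrow>[0..<l]. g (SetP (f j))) = real (card ?A)"
  proof -
    have "(\<Sum>j\<leftarrow>[0..<l]. g (SetP (f j))) = (\<Sum>j\<in>{0..<l}. g (SetP (f j)))"
      by (simp add: sum_set_upt_conv_sum_list_nat[symmetric])
    also have "\<dots> = (\<Sum>j\<in>{0..<l}. if j \<in> ?A then 1 else 0)"
    proof (intro sum.cong refl)
      fix j assume j: "j \<in> {0..<l}"
      have "SetP (f j) \<in> ?Apts \<longleftrightarrow> j \<in> ?A"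
      proof
        assume "SetP (f j) \<in> ?Apts"
        then obtain j' where j': "j' \<in> ?A" "f j = f j'" by auto
        then obtain u where u: "u \<in> set xs" "u \<in> S (f j')" "cov S f l u = 1" "j' < l"
          by (auto simp: Aset_def)
        have jl: "j < l" using j by simp
        have uj: "u \<in> S (f j)" using u(2) j'(2) by simp
        have "j = j'" by (rule cov_one_unique[OF u(3) jl uj u(4) u(2)])
        thus "j \<in> ?A" using j' by simp
      qed auto
      thus "g (SetP (f j)) = (if j \<in> ?A then 1 else 0)" by (simp add: g_def)
    qed
    also have "\<dots> = real (card ({0..<l} \<inter> ?A))"
      by (simp add: sum.If_cases)
    also have "{0..<l} \<inter> ?A = ?A" by (auto simp: Aset_def)
    finally show ?thesis .
  qed
  have hsum: "(\<Sum>z\<leftarrow>map Elem xs. h z) = (\<Sum>u\<leftarrow>xs. if cov S f l u \<ge> 2 then 1 else 0)"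
    by (simp add: h_def o_def image_iff)
  show ?thesis
    unfolding dk_def
  proof (rule Min.boundedI[OF finV neV])
    fix v assume "v \<in> ?V"
    then obtain ys zs where v: "v = sum_list (map2 (rp_dist S \<epsilon>) ys zs)"
      and ys: "mset ys = ?K" and zs: "mset zs = ?L" by blast
    have lys: "length ys = l" using ys by (metis size_mset length_map length_upt diff_zero)
    have lzs: "length zs = l" using zs len by (metis size_mset length_map)
    have pt: "(2 - \<epsilon>) - (1 - \<epsilon>) * (g y + h z) \<le> rp_dist S \<epsilon> y z"
      if yz: "(y, z) \<in> set (zip ys zs)" for y z
    proof -
      have "y \<in> set ys" using yz by (rule set_zip_leftD)
      hence "y \<in># ?K" using ys by (metis set_mset_mset)
      then obtain j where j: "j < l" "y = SetP (f j)" by auto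
      have "z \<in> set zs" using yz by (rule set_zip_rightD)
      hence "z \<in># ?L" using zs by (metis set_mset_mset)
      then obtain u where u: "u \<in> set xs" "z = Elem u" by auto
      have g0: "g y \<ge> 0" and h0: "h z \<ge> 0" by (auto simp: g_def h_def)
      show ?thesis
      proof (cases "u \<in> S (f j)")
        case False
        have "(1 - \<epsilon>) * (g y + h z) \<ge> 0" using eps g0 h0 by simp
        thus ?thesis using j u False by simp
      next
        case True
        have "g y + h z \<ge> 1"
        proof (cases "cov S f l u \<ge> 2")
          case True
          hence "h z = 1" unfolding h_def u(2) by simp
          thus ?thesis using g0 by simp
        next
          case False
          hence "cov S f l u = 1" using cov_pos[of j l u S f] j(1) \<open>u \<in> S (f j)\<close> by simp
          hence "j \<in> ?A" using j(1) u(1) True unfolding Aset_def by blast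
          hence "g y = 1" unfolding j(2) g_def by simp
          thus ?thesis using h0 by simp
        qed
        hence "(1 - \<epsilon>) * 1 \<le> (1 - \<epsilon>) * (g y + h z)" using eps by (intro mult_left_mono) auto
        thus ?thesis using j u True by simp
      qed
    qed
    have "?lhs = (\<Sum>(y,z)\<leftarrow>zip ys zs. (2 - \<epsilon>) - (1 - \<epsilon>) * (g y + h z))"
    proof -
      have "(\<Sum>y\<leftarrow>ys. g y) = (\<Sum>j\<leftarrow>[0..<l]. g (SetP (f j)))"
        using sum_list_via_mset[OF ys, of g] by (simp add: o_def)
      moreover have "(\<Sum>z\<leftarrow>zs. h z) = (\<Sum>z\<leftarrow>map Elem xs. h z)"
        using sum_list_via_mset[OF zs, of h] by simp
      ultimately show ?thesis
        using sum_list_zip_lin[of ys zs "2 - \<epsilon>" "1 - \<epsilon>" g h] lys lzs gsum hsum by simp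
    qed
    also have "\<dots> \<le> v" unfolding v
    proof (rule sum_list_mono)
      fix p assume p: "p \<in> set (zip ys zs)"
      obtain y z where yz: "p = (y, z)" by (cases p)
      show "(case p of (y, z) \<Rightarrow> 2 - \<epsilon> - (1 - \<epsilon>) * (g y + h z)) \<le> (case p of (x, y) \<Rightarrow> rp_dist S \<epsilon> x y)"
        using pt[of y z] p unfolding yz by simp
    qed
    finally show "?lhs \<le> v" .
  qed
qed


lemma final_alg:
  fixes \<epsilon> b w a p d L cost x0 :: real
  assumes "1/3 \<le> b" "b \<le> 1/2" "0 < \<epsilon>" "\<epsilon> \<le> 0.06" "1/2 \<le> w" "w \<le> 1"
    "a * (1 - 2 * \<epsilon>) \<le> w" "a \<le> 1" "x0 = 1 - 2 * b + 2 * \<epsilon>"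
    "p + 2 * d \<le> 1" "p + d \<le> 1 - b + \<epsilon>" "0 \<le> L"
    "L * (2 - \<epsilon>) - (1 - \<epsilon>) * (L * (1 - w * (1 + x0) + \<epsilon>) + w * L * p + L * d) \<le> cost"
  shows "L * (1 + a - b - 3 * (1 + b) * \<epsilon>) \<le> cost"
proof -
  have "w * p + d = (2 * w - 1) * (p + d) + (1 - w) * (p + 2 * d)" by algebra
  also have "\<dots> \<le> (2 * w - 1) * (1 - b + \<epsilon>) + (1 - w) * 1"
  proof -
    have "(2 * w - 1) * (p + d) \<le> (2 * w - 1) * (1 - b + \<epsilon>)" using assms by (intro mult_left_mono) auto
    moreover have "(1 - w) * (p + 2 * d) \<le> (1 - w) * 1" using assms by (intro mult_left_mono) auto
    ultimately show ?thesis by linarith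
  qed
  finally have T0: "w * p + d \<le> (2 * w - 1) * (1 - b + \<epsilon>) + (1 - w) * 1" .
  have e: "w * (1 + x0) = 2 * w * (1 - b + \<epsilon>)" unfolding assms(9) by (simp add: algebra_simps)
  have "1 - w * (1 + x0) + \<epsilon> + w * p + d = 1 - 2 * w * (1 - b + \<epsilon>) + \<epsilon> + (w * p + d)"
    using e by simp
  also have "\<dots> \<le> 1 - 2 * w * (1 - b + \<epsilon>) + \<epsilon> + ((2 * w - 1) * (1 - b + \<epsilon>) + (1 - w) * 1)"
    using T0 by simp
  also have "\<dots> = 1 + b - w" by (simp add: algebra_simps)
  finally have T: "1 - w * (1 + x0) + \<epsilon> + w * p + d \<le> 1 + b - w" .
  have "(1 - \<epsilon>) * (L * (1 - w * (1 + x0) + \<epsilon>) + w * L * p + L * d)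
      = (1 - \<epsilon>) * L * (1 - w * (1 + x0) + \<epsilon> + w * p + d)" by (simp add: algebra_simps)
  also have "\<dots> \<le> (1 - \<epsilon>) * L * (1 + b - w)"
    using T assms by (intro mult_left_mono) auto
  also have "\<dots> \<le> L * (1 + b - w)"
  proof (rule mult_right_mono)
    have "\<epsilon> * L \<ge> 0" using assms by simp
    thus "(1 - \<epsilon>) * L \<le> L" by (simp add: algebra_simps)
    show "0 \<le> 1 + b - w" using assms by simp
  qed
  finally have "L * (2 - \<epsilon>) - L * (1 + b - w) \<le> cost" using assms(13) by linarith
  moreover have "L * (1 + a - b - 3 * (1 + b) * \<epsilon>) \<le> L * (2 - \<epsilon>) - L * (1 + b - w)"
  proof -
    have "1 + a - b - 3 * (1 + b) * \<epsilon> \<le> (2 - \<epsilon>) - (1 + b - w)"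
    proof -
      have "a * \<epsilon> \<le> \<epsilon>" using assms by (simp add: mult_le_cancel_right1)
      moreover have "b * \<epsilon> \<ge> 0" using assms by simp
      moreover have "3 * (1 + b) * \<epsilon> = 3 * \<epsilon> + 3 * (b * \<epsilon>)" by (simp add: algebra_simps)
      moreover have "a * (1 - 2 * \<epsilon>) = a - 2 * (a * \<epsilon>)" by (simp add: algebra_simps)
      ultimately have "1 + a - b - 3 * (1 + b) * \<epsilon> \<le> 1 - \<epsilon> - b + a * (1 - 2 * \<epsilon>)"
        by linarith
      thus ?thesis using assms(7) by linarith
    qed
    hence "L * (1 + a - b - 3 * (1 + b) * \<epsilon>) \<le> L * ((2 - \<epsilon>) - (1 + b - w))"
      using assms(12) by (rule mult_left_mono)
    also have "\<dots> = L * (2 - \<epsilon>) - L * (1 + b - w)" by (simp only: right_diff_distrib)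
    finally show ?thesis .
  qed
  ultimately show ?thesis by linarith
qed
theorem lemma4:
  fixes N l m :: nat and S :: "nat \<Rightarrow> nat set" and \<epsilon> :: real
  assumes N_pos: "N > 0"
    and l_pos: "l > 0"
    and l_dvd: "l dvd N"
    and S_sub: "\<forall>i<m. S i \<subseteq> {..<N}"
    and S_card: "\<forall>i<m. card (S i) = N div l"
    and eps_pos: "\<epsilon> > 0"
    and eps_le: "\<epsilon> \<le> 0.06"
    and eps_ge: "\<epsilon> \<ge> exp (-1) - (1 - 1 / real l) ^ l"
    and partial_cover: "\<forall>f. (\<forall>j<l. f j < m) \<longrightarrow>
            real (card (\<Union>j<l. S (f j))) \<le> (1 - exp (-1) + \<epsilon>) * real N"
  shows "\<forall>K. size K = l \<and> (\<forall>x\<in>#K. \<exists>i<m. x = SetP i) \<longrightarrow>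
           rp_cost S \<epsilon> N l K \<ge>
             real l * (1 + exp (-1 + 2 / exp 1) - exp (-1) - 3 * (1 + 1 / exp 1) * \<epsilon>)"
proof (intro allI impI)
  fix K :: "rp_point multiset"
  assume K: "size K = l \<and> (\<forall>x\<in>#K. \<exists>i<m. x = SetP i)"
  obtain ks where ks: "mset ks = K" using ex_mset by blast
  have lks: "length ks = l" using K ks by (metis size_mset)
  define f where "f j = (SOME i. i < m \<and> ks ! j = SetP i)" for j
  have f: "f j < m \<and> ks ! j = SetP (f j)" if "j < l" for j
  proof -
    have "ks ! j \<in> set ks" using that lks by simp
    hence "ks ! j \<in># K" using ks by (metis set_mset_mset)
    then have "\<exists>i. i < m \<and> ks ! j = SetP i" using K by blast
    thus ?thesis unfolding f_def by (rule someI_ex)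
  qed
  have Keq: "K = mset (map (\<lambda>j. SetP (f j)) [0..<l])"
  proof -
    have "ks = map (\<lambda>j. SetP (f j)) [0..<l]"
      by (rule nth_equalityI) (use lks f in auto)
    thus ?thesis using ks by simp
  qed
  have fm: "\<forall>j<l. f j < m" using f by blast
  define c where "c u = cov S f l u" for u
  define U where "U = {..<N}"
  define Ls where "Ls = {xs. set xs \<subseteq> U \<and> length xs = l}"
  define Q where "Q j = {u \<in> S (f j). c u = 1}" for j
  define P where "P = card {u \<in> U. c u = 1}"
  define D where "D = card {u \<in> U. c u \<ge> 2}"
  define b where "b = exp (-1::real)"
  define a where "a = exp (-1 + 2 / exp 1::real)"
  define x0 where "x0 = 1 - 2 * b + 2 * \<epsilon>"
  define w where "w = exp (-x0)"
  define lower where "lower xs = real l * (2 - \<epsilon>) - (1 - \<epsilon>) * (real (card (Aset S f l xs))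
           + (\<Sum>u\<leftarrow>xs. if cov S f l u \<ge> 2 then 1 else 0))" for xs
  define L where "L = real l"
  define p where "p = real P / real N"
  define d where "d = real D / real N"
  have finU: "finite U" and cardU: "card U = N" by (auto simp: U_def)
  have finLs: "finite Ls" unfolding Ls_def using finU by (rule finite_lists_length_eq)
  have cardLs: "card Ls = N ^ l" unfolding Ls_def using finU cardU by (simp add: card_lists_length_eq)
  have Sf_sub: "S (f j) \<subseteq> U" if "j < l" for j using S_sub fm that unfolding U_def by auto
  have Sf_card: "card (S (f j)) = N div l" if "j < l" for j using S_card fm that by auto
  have QU: "Q j \<subseteq> U" if "j < l" for j using Sf_sub[OF that] unfolding Q_def by auto
  have ldiv: "l * (N div l) = N" using l_dvd by simp
  have Npos: "real N > 0" using N_pos by simp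
  have Nlpos: "real N ^ l > 0" using Npos by simp

  have stepA: "(\<Sum>xs\<in>Ls. lower xs) / real N ^ l \<le> rp_cost S \<epsilon> N l K"
  proof -
    have "(\<Sum>xs\<in>Ls. lower xs) \<le> (\<Sum>xs\<in>Ls. dk (rp_dist S \<epsilon>) K (mset (map Elem xs)))"
    proof (rule sum_mono)
      fix xs assume "xs \<in> Ls"
      hence "length xs = l" by (simp add: Ls_def)
      thus "lower xs \<le> dk (rp_dist S \<epsilon>) K (mset (map Elem xs))"
        unfolding lower_def Keq using eps_le by (intro dk_lower) auto
    qed
    moreover have "rp_cost S \<epsilon> N l K = (\<Sum>xs\<in>Ls. dk (rp_dist S \<epsilon>) K (mset (map Elem xs))) / real N ^ l"
      by (simp add: rp_cost_def Ls_def U_def)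
    ultimately show ?thesis using Nlpos by (simp add: divide_right_mono)
  qed
  have cardA: "real (card (Aset S f l xs)) = (\<Sum>j<l. if set xs \<inter> Q j \<noteq> {} then 1 else 0)" for xs
  proof -
    have "Aset S f l xs = {j \<in> {..<l}. set xs \<inter> Q j \<noteq> {}}"
      by (auto simp: Aset_def Q_def c_def)
    hence "real (card (Aset S f l xs)) = (\<Sum>j\<in>{j \<in> {..<l}. set xs \<inter> Q j \<noteq> {}}. 1)"
      by simp
    also have "\<dots> = (\<Sum>j<l. if set xs \<inter> Q j \<noteq> {} then 1 else 0)"
      by (rule sum.inter_filter) simp
    finally show ?thesis .
  qed
  have sumA: "(\<Sum>xs\<in>Ls. real (card (Aset S f l xs))) = (\<Sum>j<l. real N ^ l - real (N - card (Q j)) ^ l)"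
  proof -
    have "(\<Sum>xs\<in>Ls. real (card (Aset S f l xs)))
        = (\<Sum>xs\<in>Ls. \<Sum>j<l. if set xs \<inter> Q j \<noteq> {} then 1 else 0)"
      by (simp add: cardA)
    also have "\<dots> = (\<Sum>j<l. \<Sum>xs\<in>Ls. if set xs \<inter> Q j \<noteq> {} then 1 else 0)"
      by (rule sum.swap)
    also have "\<dots> = (\<Sum>j<l. real N ^ l - real (N - card (Q j)) ^ l)"
    proof (rule sum.cong[OF refl])
      fix j assume "j \<in> {..<l}"
      hence "Q j \<subseteq> U" using QU by simp
      thus "(\<Sum>xs\<in>Ls. if set xs \<inter> Q j \<noteq> {} then 1 else 0) = real N ^ l - real (N - card (Q j)) ^ l"
        unfolding Ls_def using count_hit[OF finU, of "Q j" l] cardU by simp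
    qed
    finally show ?thesis .
  qed
  have sumD: "(\<Sum>xs\<in>Ls. (\<Sum>u\<leftarrow>xs. if cov S f l u \<ge> 2 then 1 else 0)) = real l * real N ^ (l - 1) * real D"
  proof -
    have "(\<Sum>xs\<in>Ls. (\<Sum>u\<leftarrow>xs. if cov S f l u \<ge> 2 then 1 else (0::real)))
        = real l * real (card U) ^ (l - 1) * (\<Sum>u\<in>U. if cov S f l u \<ge> 2 then 1 else 0)"
      unfolding Ls_def by (rule sum_lists_sum_list[OF finU])
    also have "(\<Sum>u\<in>U. if cov S f l u \<ge> 2 then 1 else (0::real)) = real D"
    proof -
      have "(\<Sum>u\<in>U. if cov S f l u \<ge> 2 then 1 else (0::real)) = (\<Sum>u\<in>{u \<in> U. c u \<ge> 2}. 1)"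
        using sum.inter_filter[OF finU, of "\<lambda>_. 1::real" "\<lambda>u. c u \<ge> 2"] by (simp add: c_def)
      thus ?thesis by (simp add: D_def)
    qed
    finally show ?thesis using cardU by simp
  qed
  have sumLower: "(\<Sum>xs\<in>Ls. lower xs) = real N ^ l * (real l * (2 - \<epsilon>))
      - (1 - \<epsilon>) * ((\<Sum>j<l. real N ^ l - real (N - card (Q j)) ^ l) + real l * real N ^ (l - 1) * real D)"
  proof -
    have "(\<Sum>xs\<in>Ls. lower xs) = (\<Sum>xs\<in>Ls. real l * (2 - \<epsilon>))
       - (1 - \<epsilon>) * ((\<Sum>xs\<in>Ls. real (card (Aset S f l xs))) + (\<Sum>xs\<in>Ls. (\<Sum>u\<leftarrow>xs. if cov S f l u \<ge> 2 then 1 else 0)))"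
      unfolding lower_def by (simp add: sum_subtractf sum.distrib sum_distrib_left[symmetric])
    also have "\<dots> = real N ^ l * (real l * (2 - \<epsilon>))
      - (1 - \<epsilon>) * ((\<Sum>j<l. real N ^ l - real (N - card (Q j)) ^ l) + real l * real N ^ (l - 1) * real D)"
      by (simp only: sumA sumD sum_constant cardLs of_nat_power)
    finally show ?thesis .
  qed
  have qle: "card (Q j) \<le> N div l" if "j < l" for j
  proof -
    have "finite (S (f j))" using Sf_sub[OF that] finU finite_subset by blast
    hence "card (Q j) \<le> card (S (f j))" unfolding Q_def by (intro card_mono) auto
    thus ?thesis using Sf_card[OF that] by simp
  qed
  have qleN: "real l * real (card (Q j)) \<le> real N" if "j < l" for j
  proof -
    have "l * card (Q j) \<le> l * (N div l)" using qle[OF that] by simp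
    hence "l * card (Q j) \<le> N" using ldiv by simp
    thus ?thesis by (metis of_nat_le_iff of_nat_mult)
  qed
  have div_eq: "(real N ^ l - real (N - card (Q j)) ^ l) / real N ^ l = 1 - (1 - real (card (Q j)) / real N) ^ l"
    if "j < l" for j
  proof -
    have "N div l \<le> N" by (rule div_le_dividend)
    hence "card (Q j) \<le> N" using qle[OF that] by linarith
    hence "real (N - card (Q j)) = real N - real (card (Q j))" by simp
    hence "real (N - card (Q j)) ^ l / real N ^ l = ((real N - real (card (Q j))) / real N) ^ l"
      by (simp only: power_divide)
    also have "(real N - real (card (Q j))) / real N = 1 - real (card (Q j)) / real N"
      using Npos by (simp add: diff_divide_distrib)
    finally have "real (N - card (Q j)) ^ l / real N ^ l = (1 - real (card (Q j)) / real N) ^ l" .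
    moreover have "(real N ^ l - real (N - card (Q j)) ^ l) / real N ^ l
        = real N ^ l / real N ^ l - real (N - card (Q j)) ^ l / real N ^ l" by (rule diff_divide_distrib)
    moreover have "real N ^ l / real N ^ l = 1" using Nlpos by simp
    ultimately show ?thesis by simp
  qed
  have Npow: "real N ^ (l - 1) / real N ^ l = 1 / real N"
  proof -
    obtain k where k: "l = Suc k" using l_pos gr0_implies_Suc by blast
    have "real N ^ l = real N * real N ^ (l - 1)" unfolding k by simp
    thus ?thesis using Npos by simp
  qed
  have stepC: "(\<Sum>xs\<in>Ls. lower xs) / real N ^ l = L * (2 - \<epsilon>)
      - (1 - \<epsilon>) * ((\<Sum>j<l. 1 - (1 - real (card (Q j)) / real N) ^ l) + L * d)"
  proof -
    have "(\<Sum>xs\<in>Ls. lower xs) / real N ^ l = real l * (2 - \<epsilon>)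
      - (1 - \<epsilon>) * ((\<Sum>j<l. (real N ^ l - real (N - card (Q j)) ^ l) / real N ^ l) + real l * (real N ^ (l - 1) / real N ^ l) * real D)"
    proof -
      have gen: "(Z * c - e * (X + Y)) / Z = c - e * (X / Z + Y / Z)" if "Z \<noteq> 0" for Z c e X Y :: real
        using that by (simp add: field_simps)
      have "(\<Sum>xs\<in>Ls. lower xs) / real N ^ l = real l * (2 - \<epsilon>)
        - (1 - \<epsilon>) * ((\<Sum>j<l. real N ^ l - real (N - card (Q j)) ^ l) / real N ^ l
           + real l * real N ^ (l - 1) * real D / real N ^ l)"
        unfolding sumLower using Nlpos by (intro gen) simp
      moreover have "(\<Sum>j<l. real N ^ l - real (N - card (Q j)) ^ l) / real N ^ l
          = (\<Sum>j<l. (real N ^ l - real (N - card (Q j)) ^ l) / real N ^ l)"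
        by (rule sum_divide_distrib)
      moreover have "real l * real N ^ (l - 1) * real D / real N ^ l = real l * (real N ^ (l - 1) / real N ^ l) * real D"
        by simp
      ultimately show ?thesis by simp
    qed
    also have "\<dots> = L * (2 - \<epsilon>)
      - (1 - \<epsilon>) * ((\<Sum>j<l. 1 - (1 - real (card (Q j)) / real N) ^ l) + L * d)"
    proof -
      have s1: "(\<Sum>j<l. (real N ^ l - real (N - card (Q j)) ^ l) / real N ^ l) = (\<Sum>j<l. 1 - (1 - real (card (Q j)) / real N) ^ l)"
        by (rule sum.cong) (auto simp: div_eq)
      have s2: "real l * (real N ^ (l - 1) / real N ^ l) * real D = L * d"
        unfolding Npow L_def d_def by simp
      show ?thesis by (simp only: s1 s2 L_def)
    qed
    finally show ?thesis .
  qed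
  have b13: "1/3 \<le> b" and b12: "b \<le> 1/2"
  proof -
    have e3: "exp (1::real) \<le> 3" by (rule exp_le)
    have e2: "2 \<le> exp (1::real)" using exp_ge_add_one_self[of 1] by simp
    have bb: "b = 1 / exp 1" unfolding b_def by (simp add: exp_minus inverse_eq_divide)
    show "1/3 \<le> b" unfolding bb using e3 by (simp add: field_simps)
    show "b \<le> 1/2" unfolding bb using e2 by (simp add: field_simps)
  qed
  have bb: "1 / exp 1 = b" unfolding b_def by (simp add: exp_minus inverse_eq_divide)
  have aeq: "a = exp (-1 + 2 * b)" unfolding a_def using bb by (metis times_divide_eq_right mult.right_neutral)
  have a1: "a \<le> 1" unfolding aeq using b12 by simp
  have x0ge: "0 \<le> x0" unfolding x0_def using b12 eps_pos by simp
  have x0le: "x0 \<le> 1/2" unfolding x0_def using b13 eps_le by simp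
  have w1: "w \<le> 1" unfolding w_def using x0ge by simp
  have w12: "1/2 \<le> w"
  proof -
    have "1 + (-x0) \<le> exp (-x0)" by (rule exp_ge_add_one_self)
    thus ?thesis unfolding w_def using x0le by simp
  qed
  have wa: "a * (1 - 2 * \<epsilon>) \<le> w"
  proof -
    have "w = a * exp (- 2 * \<epsilon>)" unfolding w_def aeq x0_def by (simp add: exp_add[symmetric])
    moreover have "1 - 2 * \<epsilon> \<le> exp (- 2 * \<epsilon>)" using exp_ge_add_one_self[of "- 2 * \<epsilon>"] by simp
    moreover have "a \<ge> 0" unfolding aeq by simp
    ultimately show ?thesis by (simp add: mult_left_mono)
  qed
  have perj: "1 - (1 - real (card (Q j)) / real N) ^ l
      \<le> (1 - w * (1 + x0) + \<epsilon>) + w * (real l * real (card (Q j)) / real N)" if "j < l" for j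
  proof -
    define x where "x = real l * real (card (Q j)) / real N"
    have x0': "0 \<le> x" unfolding x_def by simp
    have x1: "x \<le> 1" unfolding x_def using qleN[OF that] Npos by simp
    have xl: "x / real l = real (card (Q j)) / real N" unfolding x_def using l_pos by simp
    have "exp (-x) - (1 - x / real l) ^ l \<le> exp (-1) - (1 - 1 / real l) ^ l"
      by (rule h_mono[OF x0' x1 l_pos])
    hence hx: "exp (-x) - (1 - real (card (Q j)) / real N) ^ l \<le> \<epsilon>" using eps_ge xl by simp
    have "exp (-x) = w * exp (x0 - x)" unfolding w_def by (simp add: exp_add[symmetric])
    moreover have "1 + (x0 - x) \<le> exp (x0 - x)" by (rule exp_ge_add_one_self)
    moreover have "w \<ge> 0" unfolding w_def by simp
    ultimately have "w * (1 + (x0 - x)) \<le> exp (-x)" by (simp add: mult_left_mono)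
    hence "1 - (1 - real (card (Q j)) / real N) ^ l \<le> 1 - w * (1 + (x0 - x)) + \<epsilon>" using hx by linarith
    also have "\<dots> = (1 - w * (1 + x0) + \<epsilon>) + w * x" by (simp add: algebra_simps)
    finally show ?thesis unfolding x_def .
  qed
  have cov_sum: "real (c u) = (\<Sum>j<l. if u \<in> S (f j) then 1 else 0)" for u
  proof -
    have "real (c u) = (\<Sum>j\<in>{j \<in> {..<l}. u \<in> S (f j)}. 1)"
      unfolding c_def cov_def by simp
    also have "\<dots> = (\<Sum>j<l. if u \<in> S (f j) then 1 else 0)"
      by (rule sum.inter_filter) simp
    finally show ?thesis .
  qed
  have sumQ: "(\<Sum>j<l. real (card (Q j))) = real P"
  proof -
    have "(\<Sum>j<l. real (card (Q j))) = (\<Sum>j<l. \<Sum>u\<in>U. if u \<in> S (f j) \<and> c u = 1 then 1 else 0)"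
    proof (rule sum.cong[OF refl])
      fix j assume "j \<in> {..<l}"
      hence QU': "Q j = {u \<in> U. u \<in> S (f j) \<and> c u = 1}" using Sf_sub unfolding Q_def by auto
      show "real (card (Q j)) = (\<Sum>u\<in>U. if u \<in> S (f j) \<and> c u = 1 then 1 else 0)"
        unfolding QU' using sum.inter_filter[OF finU, of "\<lambda>_. 1::real"] by simp
    qed
    also have "\<dots> = (\<Sum>u\<in>U. \<Sum>j<l. if u \<in> S (f j) \<and> c u = 1 then 1 else 0)"
      by (rule sum.swap)
    also have "\<dots> = (\<Sum>u\<in>U. if c u = 1 then 1 else 0)"
    proof (rule sum.cong[OF refl])
      fix u assume "u \<in> U"
      show "(\<Sum>j<l. if u \<in> S (f j) \<and> c u = 1 then 1 else (0::real)) = (if c u = 1 then 1 else 0)"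
      proof (cases "c u = 1")
        case True
        thus ?thesis using cov_sum[of u] by simp
      qed simp
    qed
    also have "\<dots> = real P" unfolding P_def using sum.inter_filter[OF finU, of "\<lambda>_. 1::real"] by simp
    finally show ?thesis .
  qed
  have sumJ: "(\<Sum>j<l. 1 - (1 - real (card (Q j)) / real N) ^ l) \<le> L * (1 - w * (1 + x0) + \<epsilon>) + w * L * p"
  proof -
    have "(\<Sum>j<l. 1 - (1 - real (card (Q j)) / real N) ^ l)
        \<le> (\<Sum>j<l. (1 - w * (1 + x0) + \<epsilon>) + w * (real l * real (card (Q j)) / real N))"
      by (rule sum_mono) (use perj in auto)
    also have "\<dots> = real l * (1 - w * (1 + x0) + \<epsilon>) + w * real l * ((\<Sum>j<l. real (card (Q j))) / real N)"
    proof -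
      have "(\<Sum>j<l. (1 - w * (1 + x0) + \<epsilon>) + w * (real l * real (card (Q j)) / real N))
          = (\<Sum>j<l. (1 - w * (1 + x0) + \<epsilon>)) + (\<Sum>j<l. (w * real l / real N) * real (card (Q j)))"
        by (simp add: sum.distrib mult.assoc)
      also have "(\<Sum>j<l. (1 - w * (1 + x0) + \<epsilon>)) = real l * (1 - w * (1 + x0) + \<epsilon>)" by simp
      also have "(\<Sum>j<l. (w * real l / real N) * real (card (Q j))) = (w * real l / real N) * (\<Sum>j<l. real (card (Q j)))"
        by (rule sum_distrib_left[symmetric])
      finally show ?thesis by simp
    qed
    also have "\<dots> = L * (1 - w * (1 + x0) + \<epsilon>) + w * L * p"
      unfolding sumQ L_def p_def ..
    finally show ?thesis .
  qed
  have realP: "real P = (\<Sum>u\<in>U. if c u = 1 then 1 else 0)"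
    unfolding P_def using sum.inter_filter[OF finU, of "\<lambda>_. 1::real"] by simp
  have realD: "real D = (\<Sum>u\<in>U. if c u \<ge> 2 then 1 else 0)"
    unfolding D_def using sum.inter_filter[OF finU, of "\<lambda>_. 1::real"] by simp
  have sumc: "(\<Sum>u\<in>U. real (c u)) = real N"
  proof -
    have "(\<Sum>u\<in>U. real (c u)) = (\<Sum>u\<in>U. \<Sum>j<l. if u \<in> S (f j) then 1 else 0)"
      by (simp add: cov_sum)
    also have "\<dots> = (\<Sum>j<l. \<Sum>u\<in>U. if u \<in> S (f j) then 1 else 0)" by (rule sum.swap)
    also have "\<dots> = (\<Sum>j<l. real (N div l))"
    proof (rule sum.cong[OF refl])
      fix j assume j: "j \<in> {..<l}"
      have "(\<Sum>u\<in>U. if u \<in> S (f j) then 1 else (0::real)) = real (card {u \<in> U. u \<in> S (f j)})"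
        using sum.inter_filter[OF finU, of "\<lambda>_. 1::real"] by simp
      also have "{u \<in> U. u \<in> S (f j)} = S (f j)" using Sf_sub j by auto
      finally show "(\<Sum>u\<in>U. if u \<in> S (f j) then 1 else (0::real)) = real (N div l)"
        using Sf_card j by simp
    qed
    also have "\<dots> = real (l * (N div l))" by simp
    finally show ?thesis using ldiv by simp
  qed
  have PD1: "real P + 2 * real D \<le> real N"
  proof -
    have "real P + 2 * real D = (\<Sum>u\<in>U. (if c u = 1 then 1 else 0) + 2 * (if c u \<ge> 2 then 1 else 0))"
      unfolding realP realD by (simp add: sum.distrib sum_distrib_left)
    also have "\<dots> \<le> (\<Sum>u\<in>U. real (c u))" by (rule sum_mono) auto
    finally show ?thesis using sumc by simp
  qed
  have PD2: "real P + real D \<le> (1 - b + \<epsilon>) * real N"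
  proof -
    define C where "C = (\<Union>j<l. S (f j))"
    have CU: "C \<subseteq> U" unfolding C_def using Sf_sub by auto
    have finC: "finite C" using CU finU finite_subset by blast
    have sub: "{u \<in> U. c u = 1} \<union> {u \<in> U. c u \<ge> 2} \<subseteq> C"
    proof
      fix u assume "u \<in> {u \<in> U. c u = 1} \<union> {u \<in> U. c u \<ge> 2}"
      hence "c u > 0" by auto
      hence "{j. j < l \<and> u \<in> S (f j)} \<noteq> {}" unfolding c_def cov_def by (metis card.empty less_irrefl)
      thus "u \<in> C" unfolding C_def by auto
    qed
    have "P + D = card ({u \<in> U. c u = 1} \<union> {u \<in> U. c u \<ge> 2})"
      unfolding P_def D_def using finU by (subst card_Un_disjoint) auto
    also have "\<dots> \<le> card C" using finC sub by (rule card_mono)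
    finally have "real P + real D \<le> real (card C)" by linarith
    also have "\<dots> \<le> (1 - exp (-1) + \<epsilon>) * real N" unfolding C_def using partial_cover fm by blast
    finally show ?thesis unfolding b_def .
  qed
  have pd1: "p + 2 * d \<le> 1"
  proof -
    have "p + 2 * d = (real P + 2 * real D) / real N" unfolding p_def d_def by (simp add: add_divide_distrib)
    also have "\<dots> \<le> 1" using PD1 Npos by simp
    finally show ?thesis .
  qed
  have pd2: "p + d \<le> 1 - b + \<epsilon>"
  proof -
    have "p + d = (real P + real D) / real N" unfolding p_def d_def by (simp add: add_divide_distrib)
    also have "\<dots> \<le> 1 - b + \<epsilon>" using PD2 Npos by (simp add: pos_divide_le_eq)
    finally show ?thesis .
  qed
  have costlow: "L * (2 - \<epsilon>) - (1 - \<epsilon>) * (L * (1 - w * (1 + x0) + \<epsilon>) + w * L * p + L * d) \<le> rp_cost S \<epsilon> N l K"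
  proof -
    have "(1 - \<epsilon>) * ((\<Sum>j<l. 1 - (1 - real (card (Q j)) / real N) ^ l) + L * d)
        \<le> (1 - \<epsilon>) * (L * (1 - w * (1 + x0) + \<epsilon>) + w * L * p + L * d)"
      using sumJ eps_le by (intro mult_left_mono) auto
    thus ?thesis using stepA stepC by linarith
  qed
  have fin: "L * (1 + a - b - 3 * (1 + b) * \<epsilon>) \<le> rp_cost S \<epsilon> N l K"
    by (rule final_alg[OF b13 b12 eps_pos eps_le w12 w1 wa a1 x0_def pd1 pd2 _ costlow]) (simp add: L_def)
  show "rp_cost S \<epsilon> N l K \<ge> real l * (1 + exp (-1 + 2 / exp 1) - exp (-1) - 3 * (1 + 1 / exp 1) * \<epsilon>)"
    using fin unfolding L_def a_def b_def bb[unfolded b_def] .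
qed
end
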